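(* Let $n\ge1$ and let $\mathcal{S}\subseteq\mathbb{R}_{++}$ be a finite set. A function $g:\overline{\mathcal{S}}^n\to[0,1]$ belongs to $\mathcal{G}_n(\mathcal{S})$ if and only if there exists $G\in\mathcal{G}_n(\mathbb{R}_{++})$ such that $g$ is the restriction of $G$ to $\overline{\mathcal{S}}^n$.
   Context: For $D\subseteq\mathbb{R}$ put $\overline{D}=D\cup\{0\}\cup\{\infty\}$ (so $\overline{\mathbb{R}_{++}}=[0,\infty]$). For $\mathbf{x}\le\mathbf{y}$ (coordinatewise) let $V_{xy}=\{x_1,y_1\}\times\cdots\times\{x_n,y_n\}$, and for $\mathbf{b}\in V_{xy}$ let $\mathrm{sgn}(\mathbf{b})=1$ if $b_i=x_i$ for an even number of indices $i$ and $-1$ otherwise. A function $G$ is $n$-increasing on $\overline{D}^n$ if $\sum_{\mathbf{b}\in V_{xy}}\mathrm{sgn}(\mathbf{b})G(\mathbf{b})\ge0$ for all $\mathbf{x}\le\mathbf{y}$ in $\overline{D}^n$. For $\mathcal{S}\subseteq\mathbb{R}_{++}$, $\mathcal{G}_n(\mathcal{S})$ is the set of functions $G:\overline{\mathcal{S}}^n\to[0,1]$ that are right continuous on $\overline{\mathcal{S}}^n$, $n$-increasing on $\overline{\mathcal{S}}^n$, satisfy $G(\mathbf{z})=0$ whenever at least one $z_i=0$, and satisfy $G(\infty,\dots,\infty)=1$. *)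

theory Defs
  imports "HOL-Analysis.Analysis" "HOL-Library.Extended_Real"
begin

text \<open>Points of [0,\<infinity>]^n are represented as functions nat \<Rightarrow> ereal that are
  extensional on {..<n} (value undefined outside), i.e. elements of PiE.\<close>

definition Dbar :: "real set \<Rightarrow> ereal set" where
  "Dbar D = ereal ` D \<union> {0, \<infinity>}"

definition dom_n :: "nat \<Rightarrow> real set \<Rightarrow> (nat \<Rightarrow> ereal) set" where
  "dom_n n D = PiE {..<n} (\<lambda>_. Dbar D)"

definition vertex :: "nat \<Rightarrow> nat set \<Rightarrow> (nat \<Rightarrow> ereal) \<Rightarrow> (nat \<Rightarrow> ereal) \<Rightarrow> (nat \<Rightarrow> ereal)" where
  "vertex n T x y = (\<lambda>i\<in>{..<n}. if i \<in> T then x i else y i)"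

definition n_increasing_on :: "nat \<Rightarrow> real set \<Rightarrow> ((nat \<Rightarrow> ereal) \<Rightarrow> real) \<Rightarrow> bool" where
  "n_increasing_on n D G \<longleftrightarrow>
     (\<forall>x\<in>dom_n n D. \<forall>y\<in>dom_n n D. (\<forall>i<n. x i \<le> y i) \<longrightarrow>
        (\<Sum>T\<in>Pow {..<n}. (-1) ^ card T * G (vertex n T x y)) \<ge> 0)"

definition right_continuous_on :: "nat \<Rightarrow> real set \<Rightarrow> ((nat \<Rightarrow> ereal) \<Rightarrow> real) \<Rightarrow> bool" where
  "right_continuous_on n D G \<longleftrightarrow>
     (\<forall>x\<in>dom_n n D. (G \<longlongrightarrow> G x)
        (at x within {y \<in> dom_n n D. \<forall>i<n. x i \<le> y i}))"

definition Gn :: "nat \<Rightarrow> real set \<Rightarrow> ((nat \<Rightarrow> ereal) \<Rightarrow> real) set" where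
  "Gn n D = {G. (\<forall>x\<in>dom_n n D. 0 \<le> G x \<and> G x \<le> 1)
              \<and> right_continuous_on n D G
              \<and> n_increasing_on n D G
              \<and> (\<forall>x\<in>dom_n n D. (\<exists>i<n. x i = 0) \<longrightarrow> G x = 0)
              \<and> G (\<lambda>i\<in>{..<n}. \<infinity>) = 1}"

end

theory Submission
  imports Defs
begin

lemma Dbar_finite: "finite S \<Longrightarrow> finite (Dbar S)"
  unfolding Dbar_def by simp

lemma Dbar_nonneg: "S \<subseteq> {0<..} \<Longrightarrow> t \<in> Dbar S \<Longrightarrow> 0 \<le> t"
  unfolding Dbar_def by auto

definition fl :: "real set \<Rightarrow> ereal \<Rightarrow> ereal" where
  "fl S t = Max {s \<in> Dbar S. s \<le> t}"

lemma fl_props: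
  assumes "finite S" "0 \<le> t"
  shows "fl S t \<in> Dbar S" "fl S t \<le> t" "\<And>s. s \<in> Dbar S \<Longrightarrow> s \<le> t \<Longrightarrow> s \<le> fl S t"
proof -
  have fin: "finite {s \<in> Dbar S. s \<le> t}" using Dbar_finite[OF assms(1)] by simp
  have ne: "{s \<in> Dbar S. s \<le> t} \<noteq> {}" using assms(2) unfolding Dbar_def by auto
  show "fl S t \<in> Dbar S" "fl S t \<le> t" using Max_in[OF fin ne] unfolding fl_def by auto
  show "\<And>s. s \<in> Dbar S \<Longrightarrow> s \<le> t \<Longrightarrow> s \<le> fl S t" unfolding fl_def using fin by auto
qed

lemma fl_id:
  assumes "finite S" "S \<subseteq> {0<..}" "t \<in> Dbar S"
  shows "fl S t = t"
  using fl_props[OF assms(1) Dbar_nonneg[OF assms(2,3)]] assms(3) by (meson order.antisym order_refl)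

lemma fl_mono:
  assumes "finite S" "0 \<le> a" "a \<le> b"
  shows "fl S a \<le> fl S b"
proof -
  have "0 \<le> b" using assms by simp
  show ?thesis using fl_props[OF assms(1) assms(2)] fl_props[OF assms(1) \<open>0\<le>b\<close>] assms(3)
    by (meson order.trans)
qed

lemma fl_right:
  assumes "finite S" "0 \<le> t" "t < \<infinity>"
  obtains m where "t < m" "\<And>u. t \<le> u \<Longrightarrow> u < m \<Longrightarrow> fl S u = fl S t"
proof -
  let ?A = "{s \<in> Dbar S. t < s}"
  have fin: "finite ?A" using Dbar_finite[OF assms(1)] by simp
  have ne: "?A \<noteq> {}" using assms(3) unfolding Dbar_def by auto
  define m where "m = Min ?A"
  have tm: "t < m" using Min_in[OF fin ne] unfolding m_def by auto
  have "fl S u = fl S t" if "t \<le> u" "u < m" for u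
  proof -
    have u0: "0 \<le> u" using assms(2) that by simp
    have a: "fl S t \<le> fl S u" using fl_mono[OF assms(1,2) that(1)] .
    have "fl S u \<in> Dbar S" "fl S u \<le> u" using fl_props[OF assms(1) u0] by auto
    hence "\<not> t < fl S u" using that(2) fin unfolding m_def
      by (metis (mono_tags, lifting) Min_le leD mem_Collect_eq order_le_less_trans)
    hence "fl S u \<le> t" by simp
    hence "fl S u \<le> fl S t" using fl_props(3)[OF assms(1,2)] \<open>fl S u \<in> Dbar S\<close> by simp
    thus ?thesis using a by simp
  qed
  thus ?thesis using that tm by blast
qed

definition flv :: "nat \<Rightarrow> real set \<Rightarrow> (nat \<Rightarrow> ereal) \<Rightarrow> (nat \<Rightarrow> ereal)" where
  "flv n S x = (\<lambda>i\<in>{..<n}. fl S (x i))"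

lemma dom_nonneg: "x \<in> dom_n n {0<..} \<Longrightarrow> i < n \<Longrightarrow> 0 \<le> x i"
  unfolding dom_n_def Dbar_def by (force simp: PiE_iff)

lemma flv_in:
  assumes "finite S" "x \<in> dom_n n {0<..}"
  shows "flv n S x \<in> dom_n n S"
  using fl_props(1)[OF assms(1) dom_nonneg[OF assms(2)]]
  unfolding flv_def dom_n_def by (auto simp: PiE_iff)

lemma flv_vertex: "flv n S (vertex n T x y) = vertex n T (flv n S x) (flv n S y)"
  unfolding flv_def vertex_def by (rule ext) auto

lemma dom_sub: "S \<subseteq> {0<..} \<Longrightarrow> dom_n n S \<subseteq> dom_n n {0<..}"
  unfolding dom_n_def Dbar_def by (rule PiE_mono) auto

lemma vertex_in: "x \<in> dom_n n D \<Longrightarrow> y \<in> dom_n n D \<Longrightarrow> vertex n T x y \<in> dom_n n D"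
  unfolding dom_n_def vertex_def by (auto simp: PiE_iff)

lemma finite_dom: "finite S \<Longrightarrow> finite (dom_n n S)"
  unfolding dom_n_def using Dbar_finite by (intro finite_PiE) auto

theorem lemma1:
  fixes n :: nat and S :: "real set" and g :: "(nat \<Rightarrow> ereal) \<Rightarrow> real"
  assumes "n \<ge> 1" and "finite S" and "S \<subseteq> {0<..}"
    and "\<forall>x\<in>dom_n n S. 0 \<le> g x \<and> g x \<le> 1"
  shows "g \<in> Gn n S \<longleftrightarrow>
         (\<exists>G\<in>Gn n {0<..}. \<forall>x\<in>dom_n n S. g x = G x)"
proof
  assume gG: "g \<in> Gn n S"
  define G where "G x = g (flv n S x)" for x
  have agree: "\<forall>x\<in>dom_n n S. g x = G x"
  proof
    fix x assume x: "x \<in> dom_n n S"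
    have "flv n S x = x" unfolding flv_def
      using x fl_id[OF assms(2,3)] unfolding dom_n_def by (auto simp: PiE_iff extensional_def)
    thus "g x = G x" unfolding G_def by simp
  qed
  have bounds: "\<forall>x\<in>dom_n n {0<..}. 0 \<le> G x \<and> G x \<le> 1"
    using assms(4) flv_in[OF assms(2)] unfolding G_def by blast
  have incr: "n_increasing_on n {0<..} G"
    unfolding n_increasing_on_def
  proof (intro ballI impI)
    fix x y assume x: "x \<in> dom_n n {0<..}" and y: "y \<in> dom_n n {0<..}" and le: "\<forall>i<n. x i \<le> y i"
    have le2: "\<forall>i<n. flv n S x i \<le> flv n S y i"
      unfolding flv_def using fl_mono[OF assms(2) dom_nonneg[OF x]] le by auto
    have "(\<Sum>T\<in>Pow {..<n}. (-1) ^ card T * g (vertex n T (flv n S x) (flv n S y))) \<ge> 0"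
      using gG flv_in[OF assms(2) x] flv_in[OF assms(2) y] le2
      unfolding Gn_def n_increasing_on_def by blast
    thus "(\<Sum>T\<in>Pow {..<n}. (-1) ^ card T * G (vertex n T x y)) \<ge> 0"
      unfolding G_def flv_vertex .
  qed
  have zero: "\<forall>x\<in>dom_n n {0<..}. (\<exists>i<n. x i = 0) \<longrightarrow> G x = 0"
  proof (intro ballI impI)
    fix x assume x: "x \<in> dom_n n {0<..}" and "\<exists>i<n. x i = 0"
    then obtain i where i: "i < n" "x i = 0" by blast
    have "fl S 0 = 0" using fl_id[OF assms(2,3)] unfolding Dbar_def by simp
    hence "flv n S x i = 0" using i unfolding flv_def by simp
    thus "G x = 0" using gG flv_in[OF assms(2) x] i unfolding Gn_def G_def by blast
  qed
  have top: "G (\<lambda>i\<in>{..<n}. \<infinity>) = 1"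
  proof -
    have "fl S \<infinity> = \<infinity>" using fl_id[OF assms(2,3)] unfolding Dbar_def by simp
    hence "flv n S (\<lambda>i\<in>{..<n}. \<infinity>) = (\<lambda>i\<in>{..<n}. \<infinity>)" unfolding flv_def by auto
    thus ?thesis using gG unfolding Gn_def G_def by simp
  qed
  have rc: "right_continuous_on n {0<..} G"
    unfolding right_continuous_on_def
  proof
    fix x assume x: "x \<in> dom_n n {0<..}"
    define A where "A = {y \<in> dom_n n {0<..}. \<forall>i<n. x i \<le> y i}"
    have ev: "eventually (\<lambda>y. fl S (y i) = fl S (x i)) (at x within A)" if i: "i < n" for i
    proof (cases "x i = \<infinity>")
      case True
      show ?thesis unfolding eventually_at_filter A_def
        by (rule always_eventually) (use True i in auto)
    next
      case False
      hence xi: "x i < \<infinity>" by simp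
      obtain m where m: "x i < m" "\<And>u. x i \<le> u \<Longrightarrow> u < m \<Longrightarrow> fl S u = fl S (x i)"
        using fl_right[OF assms(2) dom_nonneg[OF x i] xi] by blast
      have "((\<lambda>y. y i) \<longlongrightarrow> x i) (at x within A)"
        using continuous_on_product_coordinates[of i]
        unfolding continuous_on_def by (metis UNIV_I subset_UNIV tendsto_within_subset)
      hence e1: "eventually (\<lambda>y. y i < m) (at x within A)" using m(1) order_tendstoD(2) by blast
      have e2: "eventually (\<lambda>y. y \<in> A) (at x within A)" unfolding eventually_at_filter by simp
      show ?thesis using eventually_conj[OF e1 e2]
        by (rule eventually_mono) (use m(2) i A_def in auto)
    qed
    have "eventually (\<lambda>y. \<forall>i\<in>{..<n}. fl S (y i) = fl S (x i)) (at x within A)"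
      using ev by (intro eventually_ball_finite) auto
    hence "eventually (\<lambda>y. G y = G x) (at x within A)"
      by (rule eventually_mono) (auto simp: G_def flv_def intro!: arg_cong[where f=g])
    thus "(G \<longlongrightarrow> G x) (at x within {y \<in> dom_n n {0<..}. \<forall>i<n. x i \<le> y i})"
      unfolding A_def[symmetric] by (rule tendsto_eventually)
  qed
  have "G \<in> Gn n {0<..}" unfolding Gn_def using bounds rc incr zero top by blast
  thus "\<exists>G\<in>Gn n {0<..}. \<forall>x\<in>dom_n n S. g x = G x" using agree by blast
next
  assume "\<exists>G\<in>Gn n {0<..}. \<forall>x\<in>dom_n n S. g x = G x"
  then obtain G where G: "G \<in> Gn n {0<..}" and ag: "\<forall>x\<in>dom_n n S. g x = G x" by blast
  have sub: "dom_n n S \<subseteq> dom_n n {0<..}" using dom_sub[OF assms(3)] .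
  have rc: "right_continuous_on n S g"
    unfolding right_continuous_on_def
  proof
    fix x assume x: "x \<in> dom_n n S"
    define A where "A = {y \<in> dom_n n S. \<forall>i<n. x i \<le> y i}"
    have fin: "finite A" using finite_dom[OF assms(2)] unfolding A_def by simp
    have ne: "eventually (\<lambda>z. z \<noteq> y) (at x within A)" if "y \<noteq> x" for y
    proof -
      obtain i where i: "x i \<noteq> y i" using \<open>y \<noteq> x\<close> by (metis ext)
      have "((\<lambda>z. z i) \<longlongrightarrow> x i) (at x within A)"
        using continuous_on_product_coordinates[of i]
        unfolding continuous_on_def by (metis UNIV_I subset_UNIV tendsto_within_subset)
      hence "eventually (\<lambda>z. z i \<noteq> y i) (at x within A)"
        using i by (rule tendsto_imp_eventually_ne)
      thus ?thesis by (rule eventually_mono) auto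
    qed
    have "eventually (\<lambda>z. \<forall>y\<in>A - {x}. z \<noteq> y) (at x within A)"
      using ne fin by (intro eventually_ball_finite) auto
    moreover have "eventually (\<lambda>z. z \<in> A \<and> z \<noteq> x) (at x within A)"
      unfolding eventually_at_filter by simp
    ultimately have "eventually (\<lambda>z. g z = g x) (at x within A)"
      by (rule eventually_elim2) blast
    hence "(g \<longlongrightarrow> g x) (at x within A)" by (rule tendsto_eventually)
    thus "(g \<longlongrightarrow> g x) (at x within {y \<in> dom_n n S. \<forall>i<n. x i \<le> y i})" using A_def by simp
  qed
  have incr: "n_increasing_on n S g"
    unfolding n_increasing_on_def
  proof (intro ballI impI)
    fix x y assume x: "x \<in> dom_n n S" and y: "y \<in> dom_n n S" and le: "\<forall>i<n. x i \<le> y i"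
    have "(\<Sum>T\<in>Pow {..<n}. (-1) ^ card T * G (vertex n T x y)) \<ge> 0"
      using G x y le sub unfolding Gn_def n_increasing_on_def by blast
    moreover have "(\<Sum>T\<in>Pow {..<n}. (-1) ^ card T * G (vertex n T x y)) =
                   (\<Sum>T\<in>Pow {..<n}. (-1) ^ card T * g (vertex n T x y))"
      using ag vertex_in[OF x y] by simp
    ultimately show "(\<Sum>T\<in>Pow {..<n}. (-1) ^ card T * g (vertex n T x y)) \<ge> 0" by simp
  qed
  have zero: "\<forall>x\<in>dom_n n S. (\<exists>i<n. x i = 0) \<longrightarrow> g x = 0"
    using G ag sub unfolding Gn_def by auto
  have inf_in: "(\<lambda>i\<in>{..<n}. \<infinity>) \<in> dom_n n S" unfolding dom_n_def Dbar_def by auto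
  have top: "g (\<lambda>i\<in>{..<n}. \<infinity>) = 1" using G ag inf_in unfolding Gn_def by auto
  show "g \<in> Gn n S" unfolding Gn_def using assms(4) rc incr zero top by blast
qed

end
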